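(* Let $\mathcal R^{rrc}$ be a rich single-crossing domain of restricted classical preferences, $[\underline R,\overline R]\subseteq\mathcal R^{rrc}$ a closed interval, and $F:[\underline R,\overline R]\to\mathbb{Z}$ a mechanism (so $F(R)\in[0,t_R]\times[0,1]$ for all $R$) with finite range such that $F(R)\,I\,(0,0)$ implies $F(R)=(0,0)$. Then $F$ is restricted strategy-proof if and only if $F$ is monotone and $V^F$ is continuous.
   Context: $\mathbb{Z}=[0,\infty)\times[0,1]$; $(t',q')<(t'',q'')$ means $t'<t''$, $q'<q''$; $x\le y$ means $x=y$ or $x<y$; $\square(z)=\{x:x\le z\}$. A restricted classical preference is a complete transitive relation $R$ (strict part $P$, indifference $I$) on $[0,t_R]\times[0,1]$, $0<t_R<\infty$, such that: for $q\in(0,1]$, $t_R\ge t''>t'\ge0$ implies $(t',q)P(t'',q)$; for $t\in[0,t_R)$, $1\ge q''>q'\ge0$ implies $(t,q'')P(t,q')$; $(0,0)I(t_R,q)$ for all $q$ and $(0,0)I(t,0)$ for $t\in[0,t_R)$; $R$ is continuous on $[0,t_R]\times[0,1]$. Two such $R',R''$ with $t_{R'}\ne t_{R''}$ satisfy single-crossing if for every $(t,q)$ with $q>0$, $t<\min\{t_{R'},t_{R''}\}$ their indifference sets through $(t,q)$ meet only at $(t,q)$. A rich single-crossing domain $\mathcal R^{rrc}$ is a set of pairwise single-crossing restricted classical preferences such that for all $x'<x''$ some member is indifferent between them. It is ordered by $R'\prec R''$ iff $t_{R'}<t_{R''}$ (this coincides with $R''$ cutting $R'$ from above, i.e. $\square(z)\cap\{x:xR''z\}\subseteq\square(z)\cap\{x:xR'z\}$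 at bundles $z=(t,q)$ with $q>0,t<t_{R'}$), with the corresponding order topology; $[\underline R,\overline R]=\{R:\underline R\precsim R\precsim\overline R\}$. A mechanism is $F:[\underline R,\overline R]\to\mathbb{Z}$ with $F(R)\in[0,t_R]\times[0,1]$. $F$ is restricted strategy-proof if for all $R,R'$ with $F(R')\in[0,t_R]\times[0,1]$, $F(R)\,R\,F(R')$. $F$ is monotone if $R'\prec R''$ implies $F(R')\le F(R'')$. $V^F$ is continuous if for any $R$ and any monotone sequence $R^n\to R$ (i.e. $R^n\precsim R^{n+1}$ for all $n$, or $R^{n+1}\precsim R^n$ for all $n$), $F(R^n)$ converges to some $z=(t_z,q_z)$ with $t_z\le t_R$ and $z\,I\,F(R)$. *)

theory Defs
  imports "HOL-Analysis.Analysis"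
begin

type_synonym bndl = "real \<times> real"

text \<open>A preference is represented as a pair (t_R, R) where R is a relation on bundles,
  meant to be defined on the domain [0,t_R] x [0,1].\<close>
type_synonym pref = "real \<times> (bndl \<Rightarrow> bndl \<Rightarrow> bool)"

definition consumption_set :: "bndl set" where
  "consumption_set = {(t, q). 0 \<le> t \<and> 0 \<le> q \<and> q \<le> 1}"

definition pdom :: "real \<Rightarrow> bndl set" where
  "pdom tR = {(t, q). 0 \<le> t \<and> t \<le> tR \<and> 0 \<le> q \<and> q \<le> 1}"

definition bless :: "bndl \<Rightarrow> bndl \<Rightarrow> bool" where
  "bless x y \<longleftrightarrow> fst x < fst y \<and> snd x < snd y"

definition ble :: "bndl \<Rightarrow> bndl \<Rightarrow> bool" where
  "ble x y \<longleftrightarrow> x = y \<or> bless x y"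

definition strict :: "(bndl \<Rightarrow> bndl \<Rightarrow> bool) \<Rightarrow> bndl \<Rightarrow> bndl \<Rightarrow> bool" where
  "strict R x y \<longleftrightarrow> R x y \<and> \<not> R y x"

definition indiff :: "(bndl \<Rightarrow> bndl \<Rightarrow> bool) \<Rightarrow> bndl \<Rightarrow> bndl \<Rightarrow> bool" where
  "indiff R x y \<longleftrightarrow> R x y \<and> R y x"

definition restricted_classical :: "pref \<Rightarrow> bool" where
  "restricted_classical P \<longleftrightarrow> (case P of (tR, R) \<Rightarrow>
     0 < tR \<and>
     (\<forall>x y. R x y \<longrightarrow> x \<in> pdom tR \<and> y \<in> pdom tR) \<and>
     (\<forall>x\<in>pdom tR. \<forall>y\<in>pdom tR. R x y \<or> R y x) \<and>
     (\<forall>x y z. R x y \<longrightarrow> R y z \<longrightarrow> R x z) \<and>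
     (\<forall>q t' t''. 0 < q \<and> q \<le> 1 \<and> 0 \<le> t' \<and> t' < t'' \<and> t'' \<le> tR
        \<longrightarrow> strict R (t', q) (t'', q)) \<and>
     (\<forall>t q' q''. 0 \<le> t \<and> t < tR \<and> 0 \<le> q' \<and> q' < q'' \<and> q'' \<le> 1
        \<longrightarrow> strict R (t, q'') (t, q')) \<and>
     (\<forall>q. 0 \<le> q \<and> q \<le> 1 \<longrightarrow> indiff R (0, 0) (tR, q)) \<and>
     (\<forall>t. 0 \<le> t \<and> t < tR \<longrightarrow> indiff R (0, 0) (t, 0)) \<and>
     (\<forall>z\<in>pdom tR. closed {x. R x z} \<and> closed {x. R z x}))"

definition indiff_set :: "pref \<Rightarrow> bndl \<Rightarrow> bndl set" where
  "indiff_set P z = {x. indiff (snd P) x z}"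

definition single_crossing :: "pref \<Rightarrow> pref \<Rightarrow> bool" where
  "single_crossing P1 P2 \<longleftrightarrow> fst P1 \<noteq> fst P2 \<and>
     (\<forall>t q. 0 < q \<and> q \<le> 1 \<and> 0 \<le> t \<and> t < min (fst P1) (fst P2) \<longrightarrow>
        indiff_set P1 (t, q) \<inter> indiff_set P2 (t, q) = {(t, q)})"

definition rich_single_crossing_domain :: "pref set \<Rightarrow> bool" where
  "rich_single_crossing_domain D \<longleftrightarrow>
     (\<forall>P\<in>D. restricted_classical P) \<and>
     (\<forall>P1\<in>D. \<forall>P2\<in>D. P1 \<noteq> P2 \<longrightarrow> single_crossing P1 P2) \<and>
     (\<forall>x'\<in>consumption_set. \<forall>x''\<in>consumption_set. bless x' x'' \<longrightarrow>
        (\<exists>P\<in>D. indiff (snd P) x' x''))"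

text \<open>Order R' \<prec> R'' iff t_R' < t_R''; closed interval [lo, hi] in D.\<close>
definition pref_interval :: "pref set \<Rightarrow> pref \<Rightarrow> pref \<Rightarrow> pref set" where
  "pref_interval D lo hi = {P\<in>D. fst lo \<le> fst P \<and> fst P \<le> fst hi}"

text \<open>Convergence of a sequence to P in the order topology of (D, \<prec>).\<close>
definition order_converges :: "pref set \<Rightarrow> (nat \<Rightarrow> pref) \<Rightarrow> pref \<Rightarrow> bool" where
  "order_converges D S P \<longleftrightarrow>
     (\<forall>A\<in>D. fst A < fst P \<longrightarrow> (\<forall>\<^sub>F n in sequentially. fst A < fst (S n))) \<and>
     (\<forall>A\<in>D. fst P < fst A \<longrightarrow> (\<forall>\<^sub>F n in sequentially. fst (S n) < fst A))"

definition is_mechanism :: "pref set \<Rightarrow> (pref \<Rightarrow> bndl) \<Rightarrow> bool" where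
  "is_mechanism Iv F \<longleftrightarrow> (\<forall>P\<in>Iv. F P \<in> pdom (fst P))"

definition restricted_strategy_proof :: "pref set \<Rightarrow> (pref \<Rightarrow> bndl) \<Rightarrow> bool" where
  "restricted_strategy_proof Iv F \<longleftrightarrow>
     (\<forall>P\<in>Iv. \<forall>P'\<in>Iv. F P' \<in> pdom (fst P) \<longrightarrow> snd P (F P) (F P'))"

definition monotone_mech :: "pref set \<Rightarrow> (pref \<Rightarrow> bndl) \<Rightarrow> bool" where
  "monotone_mech Iv F \<longleftrightarrow>
     (\<forall>P'\<in>Iv. \<forall>P''\<in>Iv. fst P' < fst P'' \<longrightarrow> ble (F P') (F P''))"

definition VF_continuous :: "pref set \<Rightarrow> pref set \<Rightarrow> (pref \<Rightarrow> bndl) \<Rightarrow> bool" where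
  "VF_continuous D Iv F \<longleftrightarrow>
     (\<forall>P\<in>Iv. \<forall>S. (\<forall>n. S n \<in> Iv) \<longrightarrow>
        ((\<forall>n. fst (S n) \<le> fst (S (Suc n))) \<or> (\<forall>n. fst (S (Suc n)) \<le> fst (S n))) \<longrightarrow>
        order_converges D S P \<longrightarrow>
        (\<exists>z. (\<lambda>n. F (S n)) \<longlonglongrightarrow> z \<and> fst z \<le> fst P \<and> indiff (snd P) z (F P)))"

end

theory Submission
  imports Defs
begin


lemma rc_unfold:
  assumes "restricted_classical (t, R)"
  shows rc_pos: "0 < t"
    and rc_dom: "\<And>x y. R x y \<Longrightarrow> x \<in> pdom t \<and> y \<in> pdom t"
    and rc_total: "\<And>x y. x \<in> pdom t \<Longrightarrow> y \<in> pdom t \<Longrightarrow> R x y \<or> R y x"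
    and rc_trans: "\<And>x y z. R x y \<Longrightarrow> R y z \<Longrightarrow> R x z"
    and rc_tmono: "\<And>q t' t''. 0 < q \<Longrightarrow> q \<le> 1 \<Longrightarrow> 0 \<le> t' \<Longrightarrow> t' < t'' \<Longrightarrow> t'' \<le> t
        \<Longrightarrow> strict R (t', q) (t'', q)"
    and rc_qmono: "\<And>s q' q''. 0 \<le> s \<Longrightarrow> s < t \<Longrightarrow> 0 \<le> q' \<Longrightarrow> q' < q'' \<Longrightarrow> q'' \<le> 1
        \<Longrightarrow> strict R (s, q'') (s, q')"
    and rc_z1: "\<And>q. 0 \<le> q \<Longrightarrow> q \<le> 1 \<Longrightarrow> indiff R (0, 0) (t, q)"
    and rc_z2: "\<And>s. 0 \<le> s \<Longrightarrow> s < t \<Longrightarrow> indiff R (0, 0) (s, 0)"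
    and rc_cl1: "\<And>z. z \<in> pdom t \<Longrightarrow> closed {x. R x z}"
    and rc_cl2: "\<And>z. z \<in> pdom t \<Longrightarrow> closed {x. R z x}"
  using assms unfolding restricted_classical_def by auto

lemma pdom_iff: "(s, q) \<in> pdom t \<longleftrightarrow> 0 \<le> s \<and> s \<le> t \<and> 0 \<le> q \<and> q \<le> 1"
  by (simp add: pdom_def)

lemma rc_refl: "restricted_classical (t, R) \<Longrightarrow> x \<in> pdom t \<Longrightarrow> R x x"
  using rc_total by blast

lemma rc_tweak: "restricted_classical (t, R) \<Longrightarrow> 0 < q \<Longrightarrow> q \<le> 1 \<Longrightarrow> 0 \<le> t' \<Longrightarrow> t' \<le> t'' \<Longrightarrow> t'' \<le> t
        \<Longrightarrow> R (t', q) (t'', q)"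
proof (cases "t' = t''")
  case True
  assume "restricted_classical (t, R)" "0 < q" "q \<le> 1" "0 \<le> t'" "t' \<le> t''" "t'' \<le> t"
  then show ?thesis using True rc_refl[of t R "(t', q)"] by (simp add: pdom_iff)
next
  case False
  assume "restricted_classical (t, R)" "0 < q" "q \<le> 1" "0 \<le> t'" "t' \<le> t''" "t'' \<le> t"
  then show ?thesis using False rc_tmono[of t R q t' t''] by (simp add: strict_def)
qed

lemma rc_qweak: "restricted_classical (t, R) \<Longrightarrow> 0 \<le> s \<Longrightarrow> s < t \<Longrightarrow> 0 \<le> q' \<Longrightarrow> q' \<le> q'' \<Longrightarrow> q'' \<le> 1
        \<Longrightarrow> R (s, q'') (s, q')"
proof (cases "q' = q''")
  case True
  assume "restricted_classical (t, R)" "0 \<le> s" "s < t" "0 \<le> q'" "q' \<le> q''" "q'' \<le> 1"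
  then show ?thesis using True rc_refl[of t R "(s, q')"] by (simp add: pdom_iff)
next
  case False
  assume "restricted_classical (t, R)" "0 \<le> s" "s < t" "0 \<le> q'" "q' \<le> q''" "q'' \<le> 1"
  then show ?thesis using False rc_qmono[of t R s q' q''] by (simp add: strict_def)
qed

lemma rc_posstrict:
  assumes rc: "restricted_classical (t, R)" and "0 \<le> s" "s < t" "0 < q" "q \<le> 1"
  shows "strict R (s, q) (0, 0)"
proof -
  have a: "strict R (s, q) (s, 0)" using rc_qmono[OF rc, of s 0 q] assms by simp
  have b: "indiff R (0, 0) (s, 0)" using rc_z2[OF rc, of s] assms by simp
  have "R (s, q) (0, 0)" using a b rc_trans[OF rc] unfolding strict_def indiff_def by blast
  moreover have "\<not> R (0, 0) (s, q)"
  proof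
    assume "R (0, 0) (s, q)"
    then have "R (s, 0) (s, q)" using b rc_trans[OF rc] unfolding indiff_def by blast
    then show False using a unfolding strict_def by blast
  qed
  ultimately show ?thesis unfolding strict_def by blast
qed

lemma IVT_path:
  fixes \<gamma> :: "real \<Rightarrow> bndl"
  assumes rc: "restricted_classical (t, R)"
    and cont: "\<And>s. isCont \<gamma> s" and ab: "\<alpha> \<le> \<beta>"
    and inp: "\<And>s. s \<in> {\<alpha>..\<beta>} \<Longrightarrow> \<gamma> s \<in> pdom t" and w: "w \<in> pdom t"
    and h1: "R (\<gamma> \<alpha>) w" and h2: "R w (\<gamma> \<beta>)"
  shows "\<exists>s\<in>{\<alpha>..\<beta>}. indiff R (\<gamma> s) w"
proof (rule ccontr)
  assume nn: "\<not> ?thesis"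
  define A where "A = \<gamma> -` {x. R x w}"
  define B where "B = \<gamma> -` {x. R w x}"
  have cA: "closed A" unfolding A_def by (rule continuous_closed_vimage[OF rc_cl1[OF rc w]]) (use cont in auto)
  have cB: "closed B" unfolding B_def by (rule continuous_closed_vimage[OF rc_cl2[OF rc w]]) (use cont in auto)
  have c: "{\<alpha>..\<beta>} \<subseteq> A \<union> B"
  proof
    fix s assume "s \<in> {\<alpha>..\<beta>}"
    then have "\<gamma> s \<in> pdom t" by (rule inp)
    then show "s \<in> A \<union> B" unfolding A_def B_def using rc_total[OF rc _ w] by auto
  qed
  have d: "A \<inter> B \<inter> {\<alpha>..\<beta>} = {}"
  proof -
    have "s \<notin> A \<inter> B \<inter> {\<alpha>..\<beta>}" for s
      using nn unfolding A_def B_def indiff_def by auto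
    then show ?thesis by blast
  qed
  have e: "A \<inter> {\<alpha>..\<beta>} = {} \<or> B \<inter> {\<alpha>..\<beta>} = {}"
    using connected_closedD[of "{\<alpha>..\<beta>}" A B] connected_Icc[of \<alpha> \<beta>] d c cA cB by blast
  have a1: "\<alpha> \<in> A \<inter> {\<alpha>..\<beta>}" unfolding A_def using h1 ab by auto
  have b1: "\<beta> \<in> B \<inter> {\<alpha>..\<beta>}" unfolding B_def using h2 ab by auto
  show False using e
  proof
    assume "A \<inter> {\<alpha>..\<beta>} = {}" then show False using a1 by (simp only: empty_iff)
  next
    assume "B \<inter> {\<alpha>..\<beta>} = {}" then show False using b1 by (simp only: empty_iff)
  qed
qed

lemma darboux_dec_cont:
  fixes f :: "real \<Rightarrow> real"
  assumes dec: "\<And>x y. \<alpha> \<le> x \<Longrightarrow> x \<le> y \<Longrightarrow> y \<le> \<beta> \<Longrightarrow> f y \<le> f x"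
    and dar: "\<And>x y v. \<alpha> \<le> x \<Longrightarrow> x \<le> y \<Longrightarrow> y \<le> \<beta> \<Longrightarrow> f y \<le> v \<Longrightarrow> v \<le> f x
        \<Longrightarrow> \<exists>w. x \<le> w \<and> w \<le> y \<and> f w = v"
  shows "continuous_on {\<alpha>..\<beta>} f"
  unfolding continuous_on_iff
proof (intro ballI allI impI)
  fix x e :: real assume "x \<in> {\<alpha>..\<beta>}" and e: "0 < e"
  then have x: "\<alpha> \<le> x" "x \<le> \<beta>" by auto
  obtain d1 where d1: "d1 > 0" "\<And>x'. \<alpha> \<le> x' \<Longrightarrow> x' \<le> x \<Longrightarrow> x - x' < d1 \<Longrightarrow> f x' < f x + e"
  proof (cases "f \<alpha> < f x + e")
    case True
    show ?thesis
    proof (rule that[of 1])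
      fix x' assume "\<alpha> \<le> x'" "x' \<le> x"
      then have "f x' \<le> f \<alpha>" using dec[of \<alpha> x'] x by auto
      then show "f x' < f x + e" using True by simp
    qed simp
  next
    case False
    have "f x \<le> f x + e/2" "f x + e/2 \<le> f \<alpha>" using False e by auto
    then obtain w where w: "\<alpha> \<le> w" "w \<le> x" "f w = f x + e/2" using dar[OF order_refl x(1) x(2)] by blast
    have "w < x" using w e by (cases "w = x") auto
    show ?thesis
    proof (rule that[of "x - w"])
      show "0 < x - w" using \<open>w < x\<close> by simp
      fix x' assume "\<alpha> \<le> x'" "x' \<le> x" "x - x' < x - w"
      then have "f x' \<le> f w" using dec[of w x'] x w by auto
      then show "f x' < f x + e" using w e by simp
    qed
  qed
  obtain d2 where d2: "d2 > 0" "\<And>x'. x \<le> x' \<Longrightarrow> x' \<le> \<beta> \<Longrightarrow> x' - x < d2 \<Longrightarrow> f x - e < f x'"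
  proof (cases "f x - e < f \<beta>")
    case True
    show ?thesis
    proof (rule that[of 1])
      fix x' assume "x \<le> x'" "x' \<le> \<beta>"
      then have "f \<beta> \<le> f x'" using dec[of x' \<beta>] x by auto
      then show "f x - e < f x'" using True by simp
    qed simp
  next
    case False
    have "f \<beta> \<le> f x - e/2" "f x - e/2 \<le> f x" using False e by auto
    then obtain w where w: "x \<le> w" "w \<le> \<beta>" "f w = f x - e/2" using dar[OF x(1) x(2) order_refl] by blast
    have "x < w" using w e by (cases "w = x") auto
    show ?thesis
    proof (rule that[of "w - x"])
      show "0 < w - x" using \<open>x < w\<close> by simp
      fix x' assume "x \<le> x'" "x' \<le> \<beta>" "x' - x < w - x"
      then have "f w \<le> f x'" using dec[of x' w] x w by auto
      then show "f x - e < f x'" using w e by simp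
    qed
  qed
  show "\<exists>d>0. \<forall>x'\<in>{\<alpha>..\<beta>}. dist x' x < d \<longrightarrow> dist (f x') (f x) < e"
  proof (intro exI[of _ "min d1 d2"] conjI ballI impI)
    show "0 < min d1 d2" using d1 d2 by simp
    fix x' assume x': "x' \<in> {\<alpha>..\<beta>}" "dist x' x < min d1 d2"
    show "dist (f x') (f x) < e"
    proof (cases "x' \<le> x")
      case True
      then have "f x \<le> f x'" using dec[of x' x] x x' by auto
      moreover have "f x' < f x + e" using d1(2)[of x'] True x' by (auto simp: dist_real_def)
      ultimately show ?thesis by (simp add: dist_real_def)
    next
      case False
      then have "f x' \<le> f x" using dec[of x x'] x x' by auto
      moreover have "f x - e < f x'" using d2(2)[of x'] False x' by (auto simp: dist_real_def)
      ultimately show ?thesis by (simp add: dist_real_def)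
    qed
  qed
qed



lemma cont_vert: "isCont (\<lambda>q. (a::real, 1 - q)) (q::real)"
  by (intro continuous_Pair continuous_const continuous_diff continuous_ident)
lemma cont_horiz: "isCont (\<lambda>q. (q::real, r::real)) (q::real)"
  by (intro continuous_Pair continuous_const continuous_ident)

lemma indiff_sym: "indiff R x y \<Longrightarrow> indiff R y x" by (simp add: indiff_def)

lemma indiff_trans: "restricted_classical (t, R) \<Longrightarrow> indiff R x y \<Longrightarrow> indiff R y z \<Longrightarrow> indiff R x z"
  unfolding indiff_def using rc_trans by blast

lemma vert_unique:
  assumes rc: "restricted_classical (t, R)" and a: "0 \<le> a" "a < t"
    and v: "0 \<le> v" "v \<le> 1" and v': "0 \<le> v'" "v' \<le> 1"
    and i1: "indiff R (a, v) x" and i2: "indiff R (a, v') x"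
  shows "v = v'"
proof (rule ccontr)
  assume "v \<noteq> v'"
  have ii: "indiff R (a, v) (a, v')" using indiff_trans[OF rc i1 indiff_sym[OF i2]] .
  show False
  proof (cases "v < v'")
    case True
    have "strict R (a, v') (a, v)" using rc_qmono[OF rc a(1) a(2) v(1) True v'(2)] .
    then show False using ii unfolding strict_def indiff_def by blast
  next
    case False
    then have "v' < v" using \<open>v \<noteq> v'\<close> by simp
    then have "strict R (a, v) (a, v')" using rc_qmono[OF rc a(1) a(2) v'(1) _ v(2)] by simp
    then show False using ii unfolding strict_def indiff_def by blast
  qed
qed

definition hfun :: "(bndl \<Rightarrow> bndl \<Rightarrow> bool) \<Rightarrow> real \<Rightarrow> real \<Rightarrow> real \<Rightarrow> real" where
  "hfun R a r s = (THE v. 0 \<le> v \<and> v \<le> 1 \<and> indiff R (a, v) (s, r))"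

lemma h_exists:
  assumes rc: "restricted_classical (t, R)" and "0 \<le> a" "a < s" "s \<le> t" "0 < r" "r \<le> 1"
  shows "\<exists>v. 0 \<le> v \<and> v \<le> 1 \<and> indiff R (a, v) (s, r)"
proof -
  have w: "(s, r) \<in> pdom t" using assms by (simp add: pdom_iff)
  have c: "\<And>q::real. isCont (\<lambda>q::real. (a, 1 - q)) q" by (rule cont_vert)
  have inp: "\<And>q. q \<in> {0..1} \<Longrightarrow> (a, 1 - q) \<in> pdom t" using assms by (auto simp: pdom_iff)
  have r1: "R (a, 1) (a, r)" using rc_qweak[OF rc, of a r 1] assms by simp
  have r2: "R (a, r) (s, r)" using rc_tweak[OF rc, of r a s] assms by simp
  have h1: "R (a, 1 - 0) (s, r)" using rc_trans[OF rc r1 r2] by simp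
  have s0: "R (s, r) (0, 0)"
  proof (cases "s < t")
    case True
    then show ?thesis using rc_posstrict[OF rc, of s r] assms by (simp add: strict_def)
  next
    case False
    then have "s = t" using assms by simp
    then show ?thesis using rc_z1[OF rc, of r] assms by (simp add: indiff_def)
  qed
  have "R (0, 0) (a, 0)" using rc_z2[OF rc, of a] assms by (simp add: indiff_def)
  then have h2: "R (s, r) (a, 1 - 1)" using rc_trans[OF rc s0] by simp
  obtain q where q: "q \<in> {0..1}" "indiff R (a, 1 - q) (s, r)"
    using IVT_path[OF rc c _ inp w h1 h2] by auto
  then show ?thesis by (intro exI[of _ "1 - q"]) auto
qed

lemma h_props:
  assumes rc: "restricted_classical (t, R)" and "0 \<le> a" "a < s" "s \<le> t" "0 < r" "r \<le> 1"
  shows "0 \<le> hfun R a r s \<and> hfun R a r s \<le> 1 \<and> indiff R (a, hfun R a r s) (s, r)"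
proof -
  obtain v where v: "0 \<le> v \<and> v \<le> 1 \<and> indiff R (a, v) (s, r)" using h_exists[OF assms] by blast
  have "hfun R a r s = v" unfolding hfun_def
  proof (rule the_equality)
    show "0 \<le> v \<and> v \<le> 1 \<and> indiff R (a, v) (s, r)" by (rule v)
    fix v' assume "0 \<le> v' \<and> v' \<le> 1 \<and> indiff R (a, v') (s, r)"
    then show "v' = v" using vert_unique[OF rc, of a v' v "(s, r)"] v assms by auto
  qed
  then show ?thesis using v by simp
qed

lemma h_eq:
  assumes rc: "restricted_classical (t, R)" and "0 \<le> a" "a < s" "s \<le> t" "0 < r" "r \<le> 1"
    and "0 \<le> v" "v \<le> 1" "indiff R (a, v) (s, r)"
  shows "hfun R a r s = v"
  using h_props[OF assms(1-6)] vert_unique[OF rc, of a v "hfun R a r s" "(s, r)"] assms by auto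

lemma h_dec:
  assumes rc: "restricted_classical (t, R)" and "0 \<le> a" "a < s" "s \<le> s'" "s' \<le> t" "0 < r" "r \<le> 1"
  shows "hfun R a r s' \<le> hfun R a r s"
proof (rule ccontr)
  assume "\<not> ?thesis"
  then have lt: "hfun R a r s < hfun R a r s'" by simp
  have p1: "0 \<le> hfun R a r s \<and> hfun R a r s \<le> 1 \<and> indiff R (a, hfun R a r s) (s, r)"
    using h_props[OF rc] assms by simp
  have p2: "0 \<le> hfun R a r s' \<and> hfun R a r s' \<le> 1 \<and> indiff R (a, hfun R a r s') (s', r)"
    using h_props[OF rc] assms by simp
  have m: "R (s, r) (s', r)" using rc_tweak[OF rc, of r s s'] assms by simp
  have "R (a, hfun R a r s) (a, hfun R a r s')"
    using p1 p2 m rc_trans[OF rc] unfolding indiff_def by blast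
  moreover have "strict R (a, hfun R a r s') (a, hfun R a r s)"
    using rc_qmono[OF rc, of a "hfun R a r s" "hfun R a r s'"] p1 p2 lt assms by simp
  ultimately show False unfolding strict_def by blast
qed

lemma h_darboux:
  assumes rc: "restricted_classical (t, R)" and "0 \<le> a" "a < s" "s \<le> s'" "s' \<le> t" "0 < r" "r \<le> 1"
    and "hfun R a r s' \<le> v" "v \<le> hfun R a r s"
  shows "\<exists>w. s \<le> w \<and> w \<le> s' \<and> hfun R a r w = v"
proof -
  have p1: "0 \<le> hfun R a r s \<and> hfun R a r s \<le> 1 \<and> indiff R (a, hfun R a r s) (s, r)"
    using h_props[OF rc] assms by simp
  have p2: "0 \<le> hfun R a r s' \<and> hfun R a r s' \<le> 1 \<and> indiff R (a, hfun R a r s') (s', r)"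
    using h_props[OF rc] assms by simp
  have v01: "0 \<le> v" "v \<le> 1" using p1 p2 assms by auto
  have w: "(a, v) \<in> pdom t" using v01 assms by (simp add: pdom_iff)
  have c: "\<And>q::real. isCont (\<lambda>q::real. (q, r)) q" by (rule cont_horiz)
  have inp: "\<And>q. q \<in> {s..s'} \<Longrightarrow> (q, r) \<in> pdom t" using assms by (auto simp: pdom_iff)
  have q1: "R (a, hfun R a r s) (a, v)" using rc_qweak[OF rc, of a v "hfun R a r s"] assms v01 p1
    by simp
  have h1: "R (s, r) (a, v)" using p1 q1 rc_trans[OF rc] unfolding indiff_def by blast
  have q2: "R (a, v) (a, hfun R a r s')" using rc_qweak[OF rc, of a "hfun R a r s'" v] assms v01 p2
    by simp
  have h2: "R (a, v) (s', r)" using p2 q2 rc_trans[OF rc] unfolding indiff_def by blast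
  obtain u where u: "u \<in> {s..s'}" "indiff R (u, r) (a, v)"
    using IVT_path[OF rc c _ inp w h1 h2] assms by auto
  have "hfun R a r u = v"
    using h_eq[OF rc, of a u r v] u assms v01 indiff_sym by auto
  then show ?thesis using u by auto
qed

lemma h_cont:
  assumes rc: "restricted_classical (t, R)" and "0 \<le> a" "a < c" "c \<le> t'" "t' \<le> t" "0 < r" "r \<le> 1"
  shows "continuous_on {c..t'} (hfun R a r)"
proof (rule darboux_dec_cont)
  fix x y assume "c \<le> x" "x \<le> y" "y \<le> t'"
  then show "hfun R a r y \<le> hfun R a r x" using h_dec[OF rc, of a x y r] assms by simp
next
  fix x y v assume "c \<le> x" "x \<le> y" "y \<le> t'" "hfun R a r y \<le> v" "v \<le> hfun R a r x"
  then show "\<exists>w. x \<le> w \<and> w \<le> y \<and> hfun R a r w = v" using h_darboux[OF rc, of a x y r v] assms by simp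
qed



lemma KL:
  assumes rc1: "restricted_classical (t1, R1)" and rc2: "restricted_classical (t2, R2)"
    and sc: "single_crossing (t1, R1) (t2, R2)" and lt: "t1 < t2"
    and yz: "bless (a, p) (c, r)" and ind: "indiff R1 (a, p) (c, r)"
  shows "strict R2 (c, r) (a, p)"
proof -
  have d1: "(a, p) \<in> pdom t1" "(c, r) \<in> pdom t1" using ind rc_dom[OF rc1] unfolding indiff_def by auto
  have ac: "a < c" "p < r" using yz by (auto simp: bless_def)
  have bnd: "0 \<le> a" "c \<le> t1" "0 \<le> p" "r \<le> 1" "0 < r" using d1 ac by (auto simp: pdom_iff)
  show ?thesis
  proof (cases "c = t1")
    case True
    have z: "indiff R1 (0, 0) (c, r)" using rc_z1[OF rc1, of r] True bnd by simp
    have y0: "indiff R1 (a, p) (0, 0)" using indiff_trans[OF rc1 ind indiff_sym[OF z]] .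
    have "p = 0"
    proof (rule ccontr)
      assume "p \<noteq> 0"
      then have "strict R1 (a, p) (0, 0)" using rc_posstrict[OF rc1, of a p] bnd ac True by simp
      then show False using y0 unfolding strict_def indiff_def by blast
    qed
    have s1: "strict R2 (c, r) (0, 0)" using rc_posstrict[OF rc2, of c r] bnd lt ac by simp
    have s2: "indiff R2 (0, 0) (a, p)" using rc_z2[OF rc2, of a] \<open>p = 0\<close> bnd ac lt by simp
    show ?thesis using s1 s2 rc_trans[OF rc2] unfolding strict_def indiff_def by blast
  next
    case False
    then have ct: "c < t1" using bnd by simp
    show ?thesis
    proof (rule ccontr)
      assume ns: "\<not> ?thesis"
      have "(a, p) \<in> pdom t2" "(c, r) \<in> pdom t2" using d1 lt by (auto simp: pdom_iff)
      then have Ryz: "R2 (a, p) (c, r)" using rc_total[OF rc2] ns unfolding strict_def by blast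
      define g where "g s = hfun R2 a r s - hfun R1 a r s" for s
      have cont: "continuous_on {c..t1} g" unfolding g_def
        by (intro continuous_on_diff h_cont[OF rc2] h_cont[OF rc1]) (use bnd ac lt in auto)
      have hp1: "\<And>s. c \<le> s \<Longrightarrow> s \<le> t1 \<Longrightarrow>
          0 \<le> hfun R1 a r s \<and> hfun R1 a r s \<le> 1 \<and> indiff R1 (a, hfun R1 a r s) (s, r)"
        using h_props[OF rc1] bnd ac by simp
      have hp2: "\<And>s. c \<le> s \<Longrightarrow> s \<le> t1 \<Longrightarrow>
          0 \<le> hfun R2 a r s \<and> hfun R2 a r s \<le> 1 \<and> indiff R2 (a, hfun R2 a r s) (s, r)"
        using h_props[OF rc2] bnd ac lt by simp
      have h1c: "hfun R1 a r c = p" using h_eq[OF rc1, of a c r p] bnd ac ind by simp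
      have h2c: "hfun R2 a r c \<le> p"
      proof (rule ccontr)
        assume "\<not> ?thesis"
        then have "strict R2 (a, hfun R2 a r c) (a, p)"
          using rc_qmono[OF rc2, of a p "hfun R2 a r c"] hp2[of c] bnd ac lt by simp
        moreover have "R2 (a, p) (a, hfun R2 a r c)"
          using Ryz hp2[of c] rc_trans[OF rc2] bnd unfolding indiff_def by blast
        ultimately show False unfolding strict_def by blast
      qed
      have gc: "g c \<le> 0" unfolding g_def using h1c h2c by simp
      have i0: "indiff R1 (a, 0) (t1, r)"
        using indiff_trans[OF rc1 indiff_sym[OF rc_z2[OF rc1, of a]] rc_z1[OF rc1, of r]] bnd ac by simp
      have h1t: "hfun R1 a r t1 = 0" using h_eq[OF rc1, of a t1 r 0] bnd ac i0 by simp
      have h2t: "hfun R2 a r t1 > 0"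
      proof (rule ccontr)
        assume "\<not> ?thesis"
        then have "hfun R2 a r t1 = 0" using hp2[of t1] bnd ac by simp
        then have "indiff R2 (a, 0) (t1, r)" using hp2[of t1] bnd ac by simp
        then have "indiff R2 (0, 0) (t1, r)"
          using indiff_trans[OF rc2 rc_z2[OF rc2, of a]] bnd ac lt by simp
        moreover have "strict R2 (t1, r) (0, 0)" using rc_posstrict[OF rc2, of t1 r] bnd lt ac by simp
        ultimately show False unfolding strict_def indiff_def by blast
      qed
      have gt: "0 \<le> g t1" unfolding g_def using h1t h2t by simp
      obtain s where s: "c \<le> s" "s \<le> t1" "g s = 0"
        using IVT'[of g c 0 t1, OF gc gt _ cont] bnd ac by auto
      have "s \<noteq> t1" using s h1t h2t unfolding g_def by auto
      then have st: "s < t1" using s by simp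
      define v where "v = hfun R1 a r s"
      have v2: "hfun R2 a r s = v" using s unfolding g_def v_def by simp
      have in1: "(a, v) \<in> indiff_set (t1, R1) (s, r)" using hp1[of s] s unfolding v_def indiff_set_def by simp
      have in2: "(a, v) \<in> indiff_set (t2, R2) (s, r)" using hp2[of s] s v2 unfolding indiff_set_def by simp
      have "indiff_set (t1, R1) (s, r) \<inter> indiff_set (t2, R2) (s, r) = {(s, r)}"
        using sc unfolding single_crossing_def using bnd ac s st lt by auto
      then have "(a, v) = (s, r)" using in1 in2 by blast
      then show False using ac s by simp
    qed
  qed
qed



lemma KL2:
  assumes rcs: "restricted_classical (ts, Rs)" and rct: "restricted_classical (tt, Rt)"
    and sc: "single_crossing (ts, Rs) (tt, Rt)" and lt: "ts < tt"
    and yz: "bless (a, p) (c, r)" and ind: "indiff Rt (a, p) (c, r)" and zd: "(c, r) \<in> pdom ts"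
  shows "strict Rs (a, p) (c, r)"
proof (rule ccontr)
  assume ns: "\<not> ?thesis"
  have d1: "(a, p) \<in> pdom tt" using ind rc_dom[OF rct] unfolding indiff_def by auto
  have ac: "a < c" "p < r" using yz by (auto simp: bless_def)
  have bnd: "0 \<le> a" "c \<le> ts" "0 \<le> p" "r \<le> 1" "0 < r" using d1 zd ac by (auto simp: pdom_iff)
  have yd: "(a, p) \<in> pdom ts" using bnd ac by (simp add: pdom_iff)
  have Rzy: "Rs (c, r) (a, p)" using rc_total[OF rcs yd zd] ns unfolding strict_def by blast
  have inp: "\<And>q. q \<in> {1 - r..1 - p} \<Longrightarrow> (a, 1 - q) \<in> pdom ts" using bnd ac by (auto simp: pdom_iff)
  have tr: "strict Rs (a, r) (c, r)" using rc_tmono[OF rcs, of r a c] bnd ac by simp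
  have h1: "Rs (a, 1 - (1 - r)) (c, r)" using tr unfolding strict_def by simp
  have h2: "Rs (c, r) (a, 1 - (1 - p))" using Rzy by simp
  obtain q where q: "q \<in> {1 - r..1 - p}" "indiff Rs (a, 1 - q) (c, r)"
    using IVT_path[OF rcs cont_vert _ inp zd h1 h2] ac by auto
  define q' where "q' = 1 - q"
  have q'b: "p \<le> q'" "q' \<le> r" using q unfolding q'_def by auto
  have "q' \<noteq> r"
  proof
    assume "q' = r"
    then show False using q tr unfolding q'_def strict_def indiff_def by simp
  qed
  then have "q' < r" using q'b by simp
  then have b2: "bless (a, q') (c, r)" using ac by (simp add: bless_def)
  have "strict Rt (c, r) (a, q')" using KL[OF rcs rct sc lt b2] q unfolding q'_def by simp
  moreover have "Rt (a, q') (a, p)" using rc_qweak[OF rct, of a p q'] bnd q'b ac lt by simp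
  then have "Rt (a, q') (c, r)" using ind rc_trans[OF rct] unfolding indiff_def by blast
  ultimately show False unfolding strict_def by blast
qed

lemma sc_sym: "single_crossing P Q \<Longrightarrow> single_crossing Q P"
  unfolding single_crossing_def by (metis Int_commute min.commute)

lemma D_rc: "rich_single_crossing_domain D \<Longrightarrow> P \<in> D \<Longrightarrow> restricted_classical P"
  unfolding rich_single_crossing_domain_def by blast

lemma D_sc: "rich_single_crossing_domain D \<Longrightarrow> P \<in> D \<Longrightarrow> Q \<in> D \<Longrightarrow> P \<noteq> Q \<Longrightarrow> single_crossing P Q"
  unfolding rich_single_crossing_domain_def by blast

lemma D_eq: "rich_single_crossing_domain D \<Longrightarrow> P \<in> D \<Longrightarrow> Q \<in> D \<Longrightarrow> fst P = fst Q \<Longrightarrow> P = Q"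
  using D_sc unfolding single_crossing_def by blast

lemma pdom_cons: "x \<in> pdom t \<Longrightarrow> x \<in> consumption_set"
  unfolding pdom_def consumption_set_def by auto

lemma D_rich: "rich_single_crossing_domain D \<Longrightarrow> x \<in> consumption_set \<Longrightarrow> y \<in> consumption_set
   \<Longrightarrow> bless x y \<Longrightarrow> \<exists>P\<in>D. indiff (snd P) x y"
  unfolding rich_single_crossing_domain_def by blast

lemma D_pos: "rich_single_crossing_domain D \<Longrightarrow> P \<in> D \<Longrightarrow> 0 < fst P"
  using D_rc[of D P] rc_pos[of "fst P" "snd P"] by simp

lemma D_exists:
  assumes D: "rich_single_crossing_domain D" and t: "0 < t"
  shows "\<exists>P\<in>D. fst P = t"
proof -
  have "(0, 0) \<in> consumption_set" "(t, 1) \<in> consumption_set" "bless (0, 0) (t, 1)"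
    using t by (auto simp: consumption_set_def bless_def)
  then obtain P where P: "P \<in> D" "indiff (snd P) (0, 0) (t, 1)" using D_rich[OF D] by blast
  obtain tp Rp where Pe: "P = (tp, Rp)" by (cases P)
  have rc: "restricted_classical (tp, Rp)" using D_rc[OF D P(1)] Pe by simp
  have "(t, 1) \<in> pdom tp" using P(2) rc_dom[OF rc] Pe unfolding indiff_def by auto
  then have le: "t \<le> tp" by (simp add: pdom_iff)
  have "\<not> t < tp"
  proof
    assume "t < tp"
    then have "strict Rp (t, 1) (0, 0)" using rc_posstrict[OF rc, of t 1] t by simp
    then show False using P(2) Pe unfolding strict_def indiff_def by simp
  qed
  then show ?thesis using le P(1) Pe by (intro bexI[of _ P]) auto
qed

lemma KLP:
  assumes D: "rich_single_crossing_domain D" and P1: "P1 \<in> D" and P2: "P2 \<in> D"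
    and lt: "fst P1 < fst P2" and yz: "bless y z" and ind: "indiff (snd P1) y z"
  shows "strict (snd P2) z y"
proof -
  have ne: "P1 \<noteq> P2" using lt by auto
  obtain a p where y: "y = (a, p)" by (cases y)
  obtain c r where z: "z = (c, r)" by (cases z)
  show ?thesis
    using KL[of "fst P1" "snd P1" "fst P2" "snd P2" a p c r] D_rc[OF D P1] D_rc[OF D P2]
      D_sc[OF D P1 P2 ne] lt yz ind y z by simp
qed

lemma KL2P:
  assumes D: "rich_single_crossing_domain D" and T: "T \<in> D" and S: "S \<in> D"
    and lt: "fst S < fst T" and yz: "bless y z" and ind: "indiff (snd T) y z" and zd: "z \<in> pdom (fst S)"
  shows "strict (snd S) y z"
proof -
  have ne: "S \<noteq> T" using lt by auto
  obtain a p where y: "y = (a, p)" by (cases y)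
  obtain c r where z: "z = (c, r)" by (cases z)
  show ?thesis
    using KL2[of "fst S" "snd S" "fst T" "snd T" a p c r] D_rc[OF D S] D_rc[OF D T]
      D_sc[OF D S T ne] lt yz ind zd y z by simp
qed

lemma ble_refl: "ble x x" by (simp add: ble_def)
lemma ble_antisym: "ble x y \<Longrightarrow> ble y x \<Longrightarrow> x = y" by (auto simp: ble_def bless_def)
lemma ble_trans: "ble x y \<Longrightarrow> ble y z \<Longrightarrow> ble x z" by (auto simp: ble_def bless_def)
lemma ble_eqfst: "ble x y \<Longrightarrow> fst x = fst y \<Longrightarrow> x = y" by (auto simp: ble_def bless_def)
lemma ble_fst: "ble x y \<Longrightarrow> fst x \<le> fst y" by (auto simp: ble_def bless_def)

lemma finite_limit:
  assumes K: "finite K" and f: "\<And>n. f n \<in> K" and lim: "f \<longlonglongrightarrow> (z :: bndl)"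
  shows "\<forall>\<^sub>F n in sequentially. f n = z"
proof -
  have "closed (K - {z})" using K by (simp add: finite_imp_closed)
  then have o: "open (- (K - {z}))" by (rule open_Compl)
  have "z \<in> - (K - {z})" by simp
  then have "\<forall>\<^sub>F n in sequentially. f n \<in> - (K - {z})" by (rule topological_tendstoD[OF lim o])
  then show ?thesis
    by (rule eventually_mono) (use f in auto)
qed

lemma oc_of_tendsto:
  assumes "(\<lambda>n. fst (S n)) \<longlonglongrightarrow> fst B"
  shows "order_converges D S B"
  unfolding order_converges_def
proof (intro conjI ballI impI)
  fix A assume "A \<in> D" "fst A < fst B"
  then show "\<forall>\<^sub>F n in sequentially. fst A < fst (S n)" by (intro order_tendstoD(1)[OF assms])
next
  fix A assume "A \<in> D" "fst B < fst A"
  then show "\<forall>\<^sub>F n in sequentially. fst (S n) < fst A" by (intro order_tendstoD(2)[OF assms])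
qed



lemma strict_trans1: "restricted_classical (t, R) \<Longrightarrow> R x y \<Longrightarrow> strict R y z \<Longrightarrow> strict R x z"
  unfolding strict_def using rc_trans by blast
lemma strict_trans2: "restricted_classical (t, R) \<Longrightarrow> strict R x y \<Longrightarrow> R y z \<Longrightarrow> strict R x z"
  unfolding strict_def using rc_trans by blast

lemma Fzero:
  assumes rc: "restricted_classical (t, R)" and Fd: "(s, q) \<in> pdom t"
    and zero: "indiff R (s, q) (0, 0) \<longrightarrow> (s, q) = (0, 0)"
  shows Fzero1: "q = 0 \<Longrightarrow> s = 0" and Fzero2: "s \<noteq> t"
proof -
  assume q: "q = 0"
  have "indiff R (s, q) (0, 0)"
  proof (cases "s < t")
    case True
    then show ?thesis using rc_z2[OF rc, of s] Fd q by (simp add: pdom_iff indiff_sym)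
  next
    case False
    then have "s = t" using Fd by (simp add: pdom_iff)
    then show ?thesis using rc_z1[OF rc, of q] Fd q by (simp add: pdom_iff indiff_sym)
  qed
  then show "s = 0" using zero by simp
next
  show "s \<noteq> t"
  proof
    assume "s = t"
    then have "indiff R (s, q) (0, 0)" using rc_z1[OF rc, of q] Fd by (simp add: pdom_iff indiff_sym)
    then have "s = 0" using zero by simp
    then show False using \<open>s = t\<close> rc_pos[OF rc] by simp
  qed
qed

lemma SP_mono:
  assumes D: "rich_single_crossing_domain D" and sub: "Iv \<subseteq> D" and mech: "is_mechanism Iv F"
    and zero: "\<forall>P\<in>Iv. indiff (snd P) (F P) (0, 0) \<longrightarrow> F P = (0, 0)"
    and sp: "restricted_strategy_proof Iv F"
  shows "monotone_mech Iv F"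
  unfolding monotone_mech_def
proof (intro ballI impI)
  fix P1 P2 assume P1: "P1 \<in> Iv" and P2: "P2 \<in> Iv" and lt: "fst P1 < fst P2"
  obtain T1 R1 where e1: "P1 = (T1, R1)" by (cases P1)
  obtain T2 R2 where e2: "P2 = (T2, R2)" by (cases P2)
  obtain s1 q1 where x: "F P1 = (s1, q1)" by (cases "F P1")
  obtain s2 q2 where y: "F P2 = (s2, q2)" by (cases "F P2")
  have P1D: "P1 \<in> D" and P2D: "P2 \<in> D" using P1 P2 sub by auto
  have rc1: "restricted_classical (T1, R1)" using D_rc[OF D P1D] e1 by simp
  have rc2: "restricted_classical (T2, R2)" using D_rc[OF D P2D] e2 by simp
  have lt': "T1 < T2" using lt e1 e2 by simp
  have xd: "(s1, q1) \<in> pdom T1" using mech P1 e1 x unfolding is_mechanism_def by force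
  have yd: "(s2, q2) \<in> pdom T2" using mech P2 e2 y unfolding is_mechanism_def by force
  have xd2: "(s1, q1) \<in> pdom T2" using xd lt' by (auto simp: pdom_iff)
  have R2yx: "R2 (s2, q2) (s1, q1)"
    using sp P1 P2 xd2 e1 e2 x y unfolding restricted_strategy_proof_def by force
  have R1xy: "s2 \<le> T1 \<Longrightarrow> R1 (s1, q1) (s2, q2)"
  proof -
    assume "s2 \<le> T1"
    then have "(s2, q2) \<in> pdom T1" using yd by (simp add: pdom_iff)
    then show ?thesis using sp P1 P2 e1 e2 x y unfolding restricted_strategy_proof_def by force
  qed
  have zz1: "indiff R1 (s1, q1) (0, 0) \<longrightarrow> (s1, q1) = (0, 0)" using zero P1 e1 x by force
  have zz2: "indiff R2 (s2, q2) (0, 0) \<longrightarrow> (s2, q2) = (0, 0)" using zero P2 e2 y by force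
  have z1: "q1 = 0 \<Longrightarrow> s1 = 0" "s1 \<noteq> T1" using Fzero[OF rc1 xd zz1] by auto
  have z2: "q2 = 0 \<Longrightarrow> s2 = 0" "s2 \<noteq> T2" using Fzero[OF rc2 yd zz2] by auto
  have b1: "0 \<le> s1" "s1 \<le> T1" "0 \<le> q1" "q1 \<le> 1" using xd by (auto simp: pdom_iff)
  have b2: "0 \<le> s2" "s2 \<le> T2" "0 \<le> q2" "q2 \<le> 1" using yd by (auto simp: pdom_iff)
  show "ble (F P1) (F P2)"
  proof (rule ccontr)
    assume nb: "\<not> ble (F P1) (F P2)"
    then have ne: "(s1, q1) \<noteq> (s2, q2)" and nbl: "\<not> (s1 < s2 \<and> q1 < q2)"
      unfolding ble_def bless_def x y by auto
    consider (c1) "s2 < s1 \<and> q2 < q1" | (c2) "s1 \<le> s2 \<and> q2 \<le> q1" | (c3) "s2 \<le> s1 \<and> q1 \<le> q2"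
      using nbl by linarith
    then show False
    proof cases
      case c1
      have bl: "bless (s2, q2) (s1, q1)" using c1 by (simp add: bless_def)
      have R1: "R1 (s1, q1) (s2, q2)" using R1xy c1 b1 by simp
      obtain \<tau> where \<tau>: "\<tau> \<in> D" "indiff (snd \<tau>) (s2, q2) (s1, q1)"
        using D_rich[OF D pdom_cons[OF yd] pdom_cons[OF xd] bl] by blast
      show False
      proof (cases "fst \<tau> < T2")
        case True
        have "strict (snd P2) (s1, q1) (s2, q2)" using KLP[OF D \<tau>(1) P2D _ bl \<tau>(2)] True e2 by simp
        then show False using R2yx e2 unfolding strict_def by simp
      next
        case False
        then have "fst P1 < fst \<tau>" using lt' e1 by simp
        then have "strict (snd P1) (s2, q2) (s1, q1)" using KL2P[OF D \<tau>(1) P1D _ bl \<tau>(2)] xd e1 by simp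
        then show False using R1 e1 unfolding strict_def by simp
      qed
    next
      case c2
      have s2T: "s2 < T2" using z2(2) b2 by simp
      have "strict R2 (s1, q1) (s2, q2)"
      proof (cases "q1 = q2")
        case True
        then have "s1 < s2" using ne c2 by auto
        show ?thesis
        proof (cases "q1 = 0")
          case True
          then show ?thesis using z1(1) z2(1) \<open>q1 = q2\<close> ne by simp
        next
          case False
          then show ?thesis using rc_tmono[OF rc2, of q1 s1 s2] \<open>q1 = q2\<close> \<open>s1 < s2\<close> b1 b2 by simp
        qed
      next
        case False
        then have qq: "q2 < q1" using c2 by simp
        have "R2 (s1, q1) (s2, q1)" using rc_tweak[OF rc2, of q1 s1 s2] qq c2 b1 b2 by simp
        moreover have "strict R2 (s2, q1) (s2, q2)" using rc_qmono[OF rc2, of s2 q2 q1] qq s2T b1 b2 by simp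
        ultimately show ?thesis by (rule strict_trans1[OF rc2])
      qed
      then show False using R2yx unfolding strict_def by simp
    next
      case c3
      have s1T: "s1 < T1" using z1(2) b1 by simp
      have R1: "R1 (s1, q1) (s2, q2)" using R1xy c3 b1 by simp
      have "strict R1 (s2, q2) (s1, q1)"
      proof (cases "q1 = q2")
        case True
        then have "s2 < s1" using ne c3 by auto
        show ?thesis
        proof (cases "q1 = 0")
          case True
          then show ?thesis using z1(1) z2(1) \<open>q1 = q2\<close> ne by simp
        next
          case False
          then show ?thesis using rc_tmono[OF rc1, of q1 s2 s1] \<open>q1 = q2\<close> \<open>s2 < s1\<close> b1 b2 by simp
        qed
      next
        case False
        then have qq: "q1 < q2" using c3 by simp
        have "R1 (s2, q2) (s1, q2)" using rc_tweak[OF rc1, of q2 s2 s1] qq c3 b1 b2 by simp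
        moreover have "strict R1 (s1, q2) (s1, q1)" using rc_qmono[OF rc1, of s1 q1 q2] qq s1T b1 b2 by simp
        ultimately show ?thesis by (rule strict_trans1[OF rc1])
      qed
      then show False using R1 unfolding strict_def by simp
    qed
  qed
qed



lemma rcP_dom: "restricted_classical P \<Longrightarrow> snd P x y \<Longrightarrow> x \<in> pdom (fst P) \<and> y \<in> pdom (fst P)"
  using rc_dom[of "fst P" "snd P"] by simp
lemma rcP_total: "restricted_classical P \<Longrightarrow> x \<in> pdom (fst P) \<Longrightarrow> y \<in> pdom (fst P) \<Longrightarrow> snd P x y \<or> snd P y x"
  using rc_total[of "fst P" "snd P"] by simp
lemma rcP_refl: "restricted_classical P \<Longrightarrow> x \<in> pdom (fst P) \<Longrightarrow> snd P x x"
  using rc_refl[of "fst P" "snd P"] by simp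
lemma rcP_trans: "restricted_classical P \<Longrightarrow> snd P x y \<Longrightarrow> snd P y z \<Longrightarrow> snd P x z"
  using rc_trans[of "fst P" "snd P"] by simp

lemma pdom_mono: "x \<in> pdom s \<Longrightarrow> s \<le> t \<Longrightarrow> x \<in> pdom t"
  by (cases x) (auto simp: pdom_iff)

lemma mono_le:
  assumes D: "rich_single_crossing_domain D" and sub: "Iv \<subseteq> D" and mono: "monotone_mech Iv F"
    and P: "P \<in> Iv" and Q: "Q \<in> Iv" and le: "fst P \<le> fst Q"
  shows "ble (F P) (F Q)"
proof (cases "fst P = fst Q")
  case True
  then have "P = Q" using D_eq[OF D] P Q sub by blast
  then show ?thesis by (simp add: ble_refl)
next
  case False
  then show ?thesis using mono P Q le unfolding monotone_mech_def by simp
qed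

lemma SP_cont:
  assumes D: "rich_single_crossing_domain D" and sub: "Iv \<subseteq> D" and mech: "is_mechanism Iv F"
    and fin: "finite (F ` Iv)" and sp: "restricted_strategy_proof Iv F" and mono: "monotone_mech Iv F"
  shows "VF_continuous D Iv F"
  unfolding VF_continuous_def
proof (intro ballI allI impI)
  fix P S assume P: "P \<in> Iv" and Sin: "\<forall>n. S n \<in> Iv"
    and mon: "(\<forall>n. fst (S n) \<le> fst (S (Suc n))) \<or> (\<forall>n. fst (S (Suc n)) \<le> fst (S n))"
    and oc: "order_converges D S P"
  have PD: "P \<in> D" using P sub by auto
  have SD: "\<And>n. S n \<in> D" using Sin sub by auto
  have rcP: "restricted_classical P" using D_rc[OF D PD] .
  have Fd: "\<And>Q. Q \<in> Iv \<Longrightarrow> F Q \<in> pdom (fst Q)" using mech unfolding is_mechanism_def by blast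
  have spI: "\<And>Q Q'. Q \<in> Iv \<Longrightarrow> Q' \<in> Iv \<Longrightarrow> F Q' \<in> pdom (fst Q) \<Longrightarrow> snd Q (F Q) (F Q')"
    using sp unfolding restricted_strategy_proof_def by blast
  define y where "y = F P"
  have yP: "y \<in> pdom (fst P)" using Fd[OF P] y_def by simp
  have finr: "finite (range (\<lambda>n. fst (F (S n))))"
  proof (rule finite_subset)
    show "range (\<lambda>n. fst (F (S n))) \<subseteq> fst ` F ` Iv" using Sin by auto
    show "finite (fst ` F ` Iv)" using fin by simp
  qed
  from mon show "\<exists>z. (\<lambda>n. F (S n)) \<longlonglongrightarrow> z \<and> fst z \<le> fst P \<and> indiff (snd P) z (F P)"
  proof
    assume inc: "\<forall>n. fst (S n) \<le> fst (S (Suc n))"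
    have incle: "\<And>m n. m \<le> n \<Longrightarrow> fst (S m) \<le> fst (S n)"
      by (rule lift_Suc_mono_le[of "\<lambda>n. fst (S n)"]) (use inc in auto)
    have leP: "\<And>n. fst (S n) \<le> fst P"
    proof (rule ccontr)
      fix m assume "\<not> fst (S m) \<le> fst P"
      then have "fst P < fst (S m)" by simp
      then have "\<forall>\<^sub>F n in sequentially. fst (S n) < fst (S m)"
        using oc SD[of m] unfolding order_converges_def by blast
      then obtain N where "\<And>n. n \<ge> N \<Longrightarrow> fst (S n) < fst (S m)" by (auto simp: eventually_sequentially)
      then have "fst (S (max N m)) < fst (S m)" by simp
      moreover have "fst (S m) \<le> fst (S (max N m))" by (rule incle) simp
      ultimately show False by simp
    qed
    obtain N where N: "\<And>n. fst (F (S n)) \<le> fst (F (S N))"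
    proof -
      have "Max (range (\<lambda>n. fst (F (S n)))) \<in> range (\<lambda>n. fst (F (S n)))"
        using finr by (intro Max_in) auto
      then obtain N where eqN: "fst (F (S N)) = Max (range (\<lambda>n. fst (F (S n))))" by auto
      show ?thesis
      proof (rule that[of N])
        fix n
        have "fst (F (S n)) \<le> Max (range (\<lambda>n. fst (F (S n))))" by (rule Max_ge[OF finr]) simp
        then show "fst (F (S n)) \<le> fst (F (S N))" using eqN by simp
      qed
    qed
    define z where "z = F (S N)"
    have const: "\<And>n. N \<le> n \<Longrightarrow> F (S n) = z"
    proof -
      fix n assume "N \<le> n"
      then have b: "ble (F (S N)) (F (S n))" using mono_le[OF D sub mono Sin[rule_format, of N] Sin[rule_format, of n]] incle by simp
      then have "fst (F (S N)) = fst (F (S n))" using ble_fst[OF b] N[of n] by simp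
      then show "F (S n) = z" using ble_eqfst[OF b] z_def by simp
    qed
    have lim: "(\<lambda>n. F (S n)) \<longlonglongrightarrow> z"
      by (rule tendsto_eventually) (use const in \<open>auto simp: eventually_sequentially\<close>)
    have zN: "z \<in> pdom (fst (S N))" using Fd Sin z_def by simp
    have zP: "z \<in> pdom (fst P)" using pdom_mono[OF zN leP[of N]] .
    have fz: "fst z \<le> fst P" using zP by (cases z) (simp add: pdom_iff)
    have bzy: "ble z y" using mono_le[OF D sub mono Sin[rule_format, of N] P leP[of N]] z_def y_def by simp
    have "indiff (snd P) z y"
    proof (cases "z = y")
      case True
      then show ?thesis using rcP_refl[OF rcP yP] by (simp add: indiff_def)
    next
      case False
      then have bl: "bless z y" using bzy by (simp add: ble_def)
      have Ryz: "snd P y z" using spI[OF P Sin[rule_format, of N] zP[unfolded z_def]] y_def z_def by simp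
      have "snd P z y"
      proof (rule ccontr)
        assume nzy: "\<not> snd P z y"
        obtain \<tau> where \<tau>: "\<tau> \<in> D" "indiff (snd \<tau>) z y"
          using D_rich[OF D pdom_cons[OF zP] pdom_cons[OF yP] bl] by blast
        have rct: "restricted_classical \<tau>" using D_rc[OF D \<tau>(1)] .
        have yt: "y \<in> pdom (fst \<tau>)" using rcP_dom[OF rct] \<tau>(2) unfolding indiff_def by blast
        consider "fst P < fst \<tau>" | "fst \<tau> = fst P" | "fst \<tau> < fst P" by linarith
        then show False
        proof cases
          case 1
          have "strict (snd P) z y" by (rule KL2P[OF D \<tau>(1) PD 1 bl \<tau>(2) yP])
          then show False using Ryz unfolding strict_def by simp
        next
          case 2
          then have "\<tau> = P" using D_eq[OF D \<tau>(1) PD] by simp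
          then show False using \<tau>(2) nzy unfolding indiff_def by simp
        next
          case 3
          then have "\<forall>\<^sub>F n in sequentially. fst \<tau> < fst (S n)"
            using oc \<tau>(1) unfolding order_converges_def by blast
          then obtain N' where N': "\<And>n. n \<ge> N' \<Longrightarrow> fst \<tau> < fst (S n)" by (auto simp: eventually_sequentially)
          define n where "n = max N N'"
          have Q: "S n \<in> Iv" using Sin by simp
          have FQ: "F (S n) = z" using const n_def by simp
          have lt: "fst \<tau> < fst (S n)" using N' n_def by simp
          have yQ: "y \<in> pdom (fst (S n))" using pdom_mono[OF yt] lt by simp
          have RQ: "snd (S n) z y" using spI[OF Q P] yQ FQ y_def by simp
          have "strict (snd (S n)) y z" by (rule KLP[OF D \<tau>(1) SD lt bl \<tau>(2)])
          then show False using RQ unfolding strict_def by simp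
        qed
      qed
      then show ?thesis using Ryz by (simp add: indiff_def)
    qed
    then show ?thesis using lim fz y_def by blast
  next
    assume dec: "\<forall>n. fst (S (Suc n)) \<le> fst (S n)"
    have decle: "\<And>m n. m \<le> n \<Longrightarrow> fst (S n) \<le> fst (S m)"
      by (rule lift_Suc_antimono_le[of "\<lambda>n. fst (S n)"]) (use dec in auto)
    have geP: "\<And>n. fst P \<le> fst (S n)"
    proof (rule ccontr)
      fix m assume "\<not> fst P \<le> fst (S m)"
      then have "fst (S m) < fst P" by simp
      then have "\<forall>\<^sub>F n in sequentially. fst (S m) < fst (S n)"
        using oc SD[of m] unfolding order_converges_def by blast
      then obtain N where "\<And>n. n \<ge> N \<Longrightarrow> fst (S m) < fst (S n)" by (auto simp: eventually_sequentially)
      then have "fst (S m) < fst (S (max N m))" by simp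
      moreover have "fst (S (max N m)) \<le> fst (S m)" by (rule decle) simp
      ultimately show False by simp
    qed
    obtain N where N: "\<And>n. fst (F (S N)) \<le> fst (F (S n))"
    proof -
      have "Min (range (\<lambda>n. fst (F (S n)))) \<in> range (\<lambda>n. fst (F (S n)))"
        using finr by (intro Min_in) auto
      then obtain N where eqN: "fst (F (S N)) = Min (range (\<lambda>n. fst (F (S n))))" by auto
      show ?thesis
      proof (rule that[of N])
        fix n
        have "Min (range (\<lambda>n. fst (F (S n)))) \<le> fst (F (S n))" by (rule Min_le[OF finr]) simp
        then show "fst (F (S N)) \<le> fst (F (S n))" using eqN by simp
      qed
    qed
    define z where "z = F (S N)"
    have const: "\<And>n. N \<le> n \<Longrightarrow> F (S n) = z"
    proof -
      fix n assume "N \<le> n"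
      then have b: "ble (F (S n)) (F (S N))" using mono_le[OF D sub mono Sin[rule_format, of n] Sin[rule_format, of N]] decle by simp
      then have "fst (F (S N)) = fst (F (S n))" using ble_fst[OF b] N[of n] by simp
      then show "F (S n) = z" using ble_eqfst[OF b] z_def by simp
    qed
    have lim: "(\<lambda>n. F (S n)) \<longlonglongrightarrow> z"
      by (rule tendsto_eventually) (use const in \<open>auto simp: eventually_sequentially\<close>)
    have fz: "fst z \<le> fst P"
    proof (rule ccontr)
      assume "\<not> ?thesis"
      then have lt: "fst P < fst z" by simp
      have "0 < fst P" using D_pos[OF D PD] .
      then obtain A where A: "A \<in> D" "fst A = (fst P + fst z) / 2" using D_exists[OF D, of "(fst P + fst z) / 2"] lt by auto
      have "fst P < fst A" using A lt by simp
      then have "\<forall>\<^sub>F n in sequentially. fst (S n) < fst A"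
        using oc A(1) unfolding order_converges_def by blast
      then obtain N' where N': "\<And>n. n \<ge> N' \<Longrightarrow> fst (S n) < fst A" by (auto simp: eventually_sequentially)
      define n where "n = max N N'"
      have "F (S n) \<in> pdom (fst (S n))" using Fd Sin by simp
      then have "fst z \<le> fst (S n)" using const[of n] n_def by (cases z) (simp add: pdom_iff)
      moreover have "fst (S n) < fst A" using N' n_def by simp
      ultimately show False using A lt by simp
    qed
    have zN: "z \<in> pdom (fst (S N))" using Fd Sin z_def by simp
    have zP: "z \<in> pdom (fst P)" using zN fz by (cases z) (simp add: pdom_iff)
    have byz: "ble y z" using mono_le[OF D sub mono P Sin[rule_format, of N] geP[of N]] z_def y_def by simp
    have "indiff (snd P) z y"
    proof (cases "z = y")
      case True
      then show ?thesis using rcP_refl[OF rcP yP] by (simp add: indiff_def)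
    next
      case False
      then have bl: "bless y z" using byz by (auto simp: ble_def)
      have Ryz: "snd P y z" using spI[OF P Sin[rule_format, of N] zP[unfolded z_def]] y_def z_def by simp
      have "snd P z y"
      proof (rule ccontr)
        assume nzy: "\<not> snd P z y"
        obtain \<tau> where \<tau>: "\<tau> \<in> D" "indiff (snd \<tau>) y z"
          using D_rich[OF D pdom_cons[OF yP] pdom_cons[OF zP] bl] by blast
        consider "fst \<tau> < fst P" | "fst \<tau> = fst P" | "fst P < fst \<tau>" by linarith
        then show False
        proof cases
          case 1
          have "strict (snd P) z y" by (rule KLP[OF D \<tau>(1) PD 1 bl \<tau>(2)])
          then show False using Ryz unfolding strict_def by simp
        next
          case 2
          then have "\<tau> = P" using D_eq[OF D \<tau>(1) PD] by simp
          then show False using \<tau>(2) nzy unfolding indiff_def by simp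
        next
          case 3
          then have "\<forall>\<^sub>F n in sequentially. fst (S n) < fst \<tau>"
            using oc \<tau>(1) unfolding order_converges_def by blast
          then obtain N' where N': "\<And>n. n \<ge> N' \<Longrightarrow> fst (S n) < fst \<tau>" by (auto simp: eventually_sequentially)
          define n where "n = max N N'"
          have Q: "S n \<in> Iv" using Sin by simp
          have FQ: "F (S n) = z" using const n_def by simp
          have lt: "fst (S n) < fst \<tau>" using N' n_def by simp
          have yQ: "y \<in> pdom (fst (S n))" using pdom_mono[OF yP geP[of n]] .
          have RQ: "snd (S n) z y" using spI[OF Q P] yQ FQ y_def by simp
          have zQ: "z \<in> pdom (fst (S n))" using Fd[OF Q] FQ by simp
          have "strict (snd (S n)) y z" by (rule KL2P[OF D \<tau>(1) SD lt bl \<tau>(2) zQ])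
          then show False using RQ unfolding strict_def by simp
        qed
      qed
      then show ?thesis using Ryz by (simp add: indiff_def)
    qed
    then show ?thesis using lim fz y_def by blast
  qed
qed



lemma seq_lim: "(\<lambda>n. b + (q - b) / (real n + 2)) \<longlonglongrightarrow> (b::real)"
proof -
  have "filterlim (\<lambda>n. 2 + real n) at_top sequentially"
    by (rule filterlim_tendsto_add_at_top[OF tendsto_const filterlim_real_sequentially])
  then have "filterlim (\<lambda>n. real n + 2) at_top sequentially" by (simp add: add.commute)
  then have "(\<lambda>n. (q - b) / (real n + 2)) \<longlonglongrightarrow> 0"
    by (rule real_tendsto_divide_at_top[OF tendsto_const])
  then have "(\<lambda>n. b + (q - b) / (real n + 2)) \<longlonglongrightarrow> b + 0" by (intro tendsto_add tendsto_const)
  then show ?thesis by simp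
qed

lemma seq_between1:
  assumes "b < (q::real)"
  shows "b < b + (q - b) / (real n + 2)" "b + (q - b) / (real n + 2) \<le> q"
proof -
  have p: "0 < q - b" using assms by simp
  show "b < b + (q - b) / (real n + 2)" using p by simp
  have "(q - b) / (real n + 2) \<le> (q - b) / 1" using p by (intro divide_left_mono) auto
  then show "b + (q - b) / (real n + 2) \<le> q" by simp
qed

lemma negdiv: "(q - b) / (d::real) = - ((b - q) / d)"
  by (simp add: minus_divide_left)

lemma seq_between2:
  assumes "q < (b::real)"
  shows "b + (q - b) / (real n + 2) < b" "q \<le> b + (q - b) / (real n + 2)"
proof -
  have p: "0 < b - q" using assms by simp
  have "0 < (b - q) / (real n + 2)" using p by simp
  then show "b + (q - b) / (real n + 2) < b" using negdiv[of q b "real n + 2"] by linarith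
  have "(b - q) / (real n + 2) \<le> (b - q) / 1" using p by (intro divide_left_mono) auto
  then have "(b - q) / (real n + 2) \<le> b - q" by simp
  then show "q \<le> b + (q - b) / (real n + 2)" using negdiv[of q b "real n + 2"] by linarith
qed

lemma seq_dec: "b \<le> (q::real) \<Longrightarrow> b + (q - b) / (real (Suc n) + 2) \<le> b + (q - b) / (real n + 2)"
  by (simp add: divide_left_mono)

lemma seq_inc: "q \<le> (b::real) \<Longrightarrow> b + (q - b) / (real n + 2) \<le> b + (q - b) / (real (Suc n) + 2)"
proof -
  assume "q \<le> b"
  then have "(b - q) / (real (Suc n) + 2) \<le> (b - q) / (real n + 2)" by (simp add: divide_left_mono)
  then show ?thesis using negdiv[of q b "real n + 2"] negdiv[of q b "real (Suc n) + 2"] by linarith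
qed

lemma mkseq:
  assumes ex: "\<And>t. min b q \<le> t \<Longrightarrow> t \<le> max b q \<Longrightarrow> \<exists>B\<in>Iv. fst B = t"
  shows "\<exists>S. \<forall>n. S n \<in> Iv \<and> fst (S n) = b + (q - b) / (real n + 2)"
proof -
  have "\<forall>n. \<exists>B. B \<in> Iv \<and> fst B = b + (q - b) / (real n + 2)"
  proof
    fix n
    have "min b q \<le> b + (q - b) / (real n + 2) \<and> b + (q - b) / (real n + 2) \<le> max b q"
    proof (cases "b < q")
      case True then show ?thesis using seq_between1[OF True, of n] by simp
    next
      case False
      show ?thesis
      proof (cases "q < b")
        case True then show ?thesis using seq_between2[OF True, of n] by simp
      next
        case False then have "q = b" using \<open>\<not> b < q\<close> by simp
        then show ?thesis by simp
      qed
    qed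
    then show "\<exists>B. B \<in> Iv \<and> fst B = b + (q - b) / (real n + 2)" using ex by blast
  qed
  then show ?thesis by (rule choice)
qed



context
  fixes D :: "pref set" and lo hi :: pref and F :: "pref \<Rightarrow> bndl"
  assumes D: "rich_single_crossing_domain D" and lo: "lo \<in> D" and hi: "hi \<in> D"
    and mech: "is_mechanism (pref_interval D lo hi) F"
    and fin: "finite (F ` pref_interval D lo hi)"
    and mono: "monotone_mech (pref_interval D lo hi) F"
    and vc: "VF_continuous D (pref_interval D lo hi) F"
begin

abbreviation "Iv \<equiv> pref_interval D lo hi"

lemma mc_sub: "Iv \<subseteq> D" unfolding pref_interval_def by auto

lemma mc_IvD: "B \<in> Iv \<Longrightarrow> fst lo \<le> fst B \<and> fst B \<le> fst hi" unfolding pref_interval_def by auto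

lemma mc_ex: "fst lo \<le> t \<Longrightarrow> t \<le> fst hi \<Longrightarrow> \<exists>B\<in>Iv. fst B = t"
proof -
  assume a: "fst lo \<le> t" "t \<le> fst hi"
  have "0 < t" using D_pos[OF D lo] a by simp
  then obtain B where B: "B \<in> D" "fst B = t" using D_exists[OF D] by blast
  then have "B \<in> Iv" using a unfolding pref_interval_def by simp
  then show ?thesis using B(2) by blast
qed

lemma mc_Fd: "Q \<in> Iv \<Longrightarrow> F Q \<in> pdom (fst Q)"
  using mech unfolding is_mechanism_def by blast

lemma mc_mono: "P \<in> Iv \<Longrightarrow> Q \<in> Iv \<Longrightarrow> fst P \<le> fst Q \<Longrightarrow> ble (F P) (F Q)"
  using mono_le[OF D mc_sub mono] by blast

lemma mc_eq: "P \<in> Iv \<Longrightarrow> Q \<in> Iv \<Longrightarrow> fst P = fst Q \<Longrightarrow> P = Q"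
  using D_eq[OF D] mc_sub by blast

lemma mc_vc:
  assumes "B \<in> Iv" "\<forall>n. S n \<in> Iv"
    "(\<forall>n. fst (S n) \<le> fst (S (Suc n))) \<or> (\<forall>n. fst (S (Suc n)) \<le> fst (S n))"
    "(\<lambda>n. fst (S n)) \<longlonglongrightarrow> fst B"
  shows "\<exists>z. (\<lambda>n. F (S n)) \<longlonglongrightarrow> z \<and> indiff (snd B) z (F B)"
proof -
  have "order_converges D S B" using oc_of_tendsto[OF assms(4)] .
  then show ?thesis using vc assms unfolding VF_continuous_def by blast
qed

lemma mc_finlim:
  assumes "\<forall>n. S n \<in> Iv" "(\<lambda>n. F (S n)) \<longlonglongrightarrow> z"
  shows "\<exists>n. F (S n) = z"
proof -
  have "\<forall>\<^sub>F n in sequentially. F (S n) = z"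
    using finite_limit[OF fin _ assms(2)] assms(1) by blast
  then show ?thesis by (auto simp: eventually_sequentially)
qed

lemma mc_seq:
  assumes "fst lo \<le> b" "b \<le> fst hi" "fst lo \<le> q" "q \<le> fst hi"
  shows "\<exists>S. \<forall>n. S n \<in> Iv \<and> fst (S n) = b + (q - b) / (real n + 2)"
proof (rule mkseq)
  fix t assume "min b q \<le> t" "t \<le> max b q"
  then show "\<exists>B\<in>Iv. fst B = t" using mc_ex assms by (simp add: min_def max_def split: if_splits)
qed

lemma seq_fun_lim:
  assumes "\<forall>n. fst (S n) = b + (q - b) / (real n + 2)"
  shows "(\<lambda>n. fst (S n)) \<longlonglongrightarrow> b"
proof -
  have "(\<lambda>n. fst (S n)) = (\<lambda>n. b + (q - b) / (real n + 2))" using assms by auto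
  then show ?thesis using seq_lim by simp
qed


lemma mc_lt:
  assumes P: "P \<in> Iv" and P': "P' \<in> Iv" and lt: "fst P' < fst P"
    and sw: "strict (snd P) (F P') (F P)"
  shows False
proof -
  have PD: "P \<in> D" using P mc_sub by auto
  have rcP: "restricted_classical P" using D_rc[OF D PD] .
  define x where "x = F P"
  have xP: "x \<in> pdom (fst P)" using mc_Fd[OF P] x_def by simp
  define Bd where "Bd = {u \<in> Iv. fst u \<le> fst P \<and> strict (snd P) (F u) x}"
  have P'Bd: "P' \<in> Bd" using P' lt sw unfolding Bd_def x_def by simp
  have finB: "finite (fst ` F ` Bd)"
  proof (rule finite_subset)
    show "fst ` F ` Bd \<subseteq> fst ` F ` Iv" unfolding Bd_def by auto
    show "finite (fst ` F ` Iv)" using fin by simp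
  qed
  obtain u0 where u0: "u0 \<in> Bd" "\<And>u. u \<in> Bd \<Longrightarrow> fst (F u) \<le> fst (F u0)"
  proof -
    have ne: "fst ` F ` Bd \<noteq> {}" using P'Bd by blast
    have "Max (fst ` F ` Bd) \<in> fst ` F ` Bd" using finB ne by (rule Max_in)
    then obtain u0 where u0: "u0 \<in> Bd" "fst (F u0) = Max (fst ` F ` Bd)" by auto
    show ?thesis
    proof (rule that[OF u0(1)])
      fix u assume "u \<in> Bd"
      then have "fst (F u) \<le> Max (fst ` F ` Bd)" using finB by (intro Max_ge) auto
      then show "fst (F u) \<le> fst (F u0)" using u0(2) by simp
    qed
  qed
  define w where "w = F u0"
  have u0I: "u0 \<in> Iv" "fst u0 \<le> fst P" "strict (snd P) w x" using u0(1) unfolding Bd_def w_def by auto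
  have wnx: "\<not> snd P x w" using u0I(3) unfolding strict_def by simp
  define W where "W = {fst u | u. u \<in> Iv \<and> fst u \<le> fst P \<and> F u = w}"
  define b where "b = Sup W"
  have Wu0: "fst u0 \<in> W" using u0I unfolding W_def w_def by blast
  have Wne: "W \<noteq> {}" using Wu0 by blast
  have Wbd: "bdd_above W" unfolding W_def by (rule bdd_aboveI[of _ "fst P"]) auto
  have ub: "fst u0 \<le> b" unfolding b_def by (rule cSup_upper[OF Wu0 Wbd])
  have bP: "b \<le> fst P" unfolding b_def by (rule cSup_least[OF Wne]) (auto simp: W_def)
  have WB: "\<And>u. u \<in> Iv \<Longrightarrow> fst u \<le> fst P \<Longrightarrow> F u = w \<Longrightarrow> fst u \<le> b"
  proof -
    fix u assume "u \<in> Iv" "fst u \<le> fst P" "F u = w"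
    then have "fst u \<in> W" unfolding W_def by blast
    then show "fst u \<le> b" unfolding b_def by (rule cSup_upper[OF _ Wbd])
  qed
  have region: "\<And>u. u \<in> Iv \<Longrightarrow> fst u0 \<le> fst u \<Longrightarrow> fst u < b \<Longrightarrow> F u = w"
  proof -
    fix u assume u: "u \<in> Iv" "fst u0 \<le> fst u" "fst u < b"
    then obtain e where "e \<in> W" "fst u < e" using less_cSup_iff[OF Wne Wbd] unfolding b_def by blast
    then obtain u' where u': "u' \<in> Iv" "fst u' \<le> fst P" "F u' = w" "fst u < fst u'" unfolding W_def by blast
    have "ble w (F u)" using mc_mono[OF u0I(1) u(1) u(2)] w_def by simp
    moreover have "ble (F u) w" using mc_mono[OF u(1) u'(1)] u'(3,4) by simp
    ultimately show "F u = w" by (rule ble_antisym[symmetric])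
  qed
  have good: "\<And>u. u \<in> Iv \<Longrightarrow> fst u \<le> fst P \<Longrightarrow> fst w < fst (F u) \<Longrightarrow> snd P x (F u)"
  proof (rule ccontr)
    fix u assume u: "u \<in> Iv" "fst u \<le> fst P" "fst w < fst (F u)" and n: "\<not> snd P x (F u)"
    have "F u \<in> pdom (fst P)" using pdom_mono[OF mc_Fd[OF u(1)] u(2)] .
    then have "snd P (F u) x" using rcP_total[OF rcP _ xP] n by blast
    then have "u \<in> Bd" using n u unfolding Bd_def strict_def by simp
    then have "fst (F u) \<le> fst w" using u0(2) w_def by simp
    then show False using u(3) by simp
  qed
  have bI: "fst lo \<le> b" "b \<le> fst hi" using mc_IvD[OF u0I(1)] mc_IvD[OF P] ub bP by auto
  obtain B where B: "B \<in> Iv" "fst B = b" using mc_ex[OF bI] by blast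
  have BD: "B \<in> D" using B mc_sub by auto
  show False
  proof (cases "F B = w")
    case True
    have bltP: "b < fst P"
    proof (rule ccontr)
      assume "\<not> b < fst P"
      then have "B = P" using mc_eq[OF B(1) P] B(2) bP by simp
      then have "w = x" using True x_def by simp
      then show False using u0I(3) unfolding strict_def by simp
    qed
    obtain S where S: "\<forall>n. S n \<in> Iv \<and> fst (S n) = b + (fst P - b) / (real n + 2)"
      using mc_seq[OF bI] mc_IvD[OF P] by blast
    have Sin: "\<forall>n. S n \<in> Iv" using S by simp
    have mon: "\<forall>n. fst (S (Suc n)) \<le> fst (S n)" using S seq_dec[of b "fst P"] bP by simp
    have lim: "(\<lambda>n. fst (S n)) \<longlonglongrightarrow> fst B" using seq_fun_lim[of S b "fst P"] S B(2) by simp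
    obtain z where z: "(\<lambda>n. F (S n)) \<longlonglongrightarrow> z" "indiff (snd B) z (F B)"
      using mc_vc[OF B(1) Sin _ lim] mon by blast
    obtain n where n: "F (S n) = z" using mc_finlim[OF Sin z(1)] by blast
    have pos: "b < fst (S n)" "fst (S n) \<le> fst P" using seq_between1[OF bltP, of n] S by auto
    have Sn: "S n \<in> Iv" using Sin by simp
    have nw: "z \<noteq> w"
    proof
      assume "z = w"
      then have "fst (S n) \<le> b" using WB[OF Sn pos(2)] n by simp
      then show False using pos by simp
    qed
    have "ble w z" using mc_mono[OF B(1) Sn] B(2) pos True n by simp
    then have bwz: "bless w z" using nw by (simp add: ble_def)
    have zP: "z \<in> pdom (fst P)" using pdom_mono[OF mc_Fd[OF Sn] pos(2)] n by simp
    have xz: "snd P x z" using good[OF Sn pos(2)] bwz n by (simp add: bless_def)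
    have "strict (snd P) z w"
      by (rule KLP[OF D BD PD _ bwz]) (use bltP B(2) z(2) True in \<open>simp_all add: indiff_sym\<close>)
    then have "snd P z w" unfolding strict_def by simp
    then have "snd P x w" using rcP_trans[OF rcP xz] by simp
    then show False using wnx by simp
  next
    case False
    have u0b: "fst u0 < b"
    proof (rule ccontr)
      assume "\<not> fst u0 < b"
      then have "B = u0" using mc_eq[OF B(1) u0I(1)] B(2) ub by simp
      then show False using False w_def by simp
    qed
    have u0lh: "fst lo \<le> fst u0" "fst u0 \<le> fst hi" using mc_IvD[OF u0I(1)] by auto
    obtain S where S: "\<forall>n. S n \<in> Iv \<and> fst (S n) = b + (fst u0 - b) / (real n + 2)"
      using mc_seq[OF bI u0lh] by blast
    have Sin: "\<forall>n. S n \<in> Iv" using S by simp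
    have mon: "\<forall>n. fst (S n) \<le> fst (S (Suc n))" using S seq_inc[of "fst u0" b] ub by simp
    have lim: "(\<lambda>n. fst (S n)) \<longlonglongrightarrow> fst B" using seq_fun_lim[of S b "fst u0"] S B(2) by simp
    obtain z where z: "(\<lambda>n. F (S n)) \<longlonglongrightarrow> z" "indiff (snd B) z (F B)"
      using mc_vc[OF B(1) Sin _ lim] mon by blast
    have FS: "\<And>n. F (S n) = w"
    proof -
      fix n
      have "fst (S n) < b" "fst u0 \<le> fst (S n)" using seq_between2[OF u0b, of n] S by auto
      then show "F (S n) = w" using region Sin by simp
    qed
    have "(\<lambda>n. F (S n)) \<longlonglongrightarrow> w" using FS by simp
    then have zw: "z = w" using z(1) LIMSEQ_unique by blast
    define z' where "z' = F B"
    have "ble w z'" using mc_mono[OF u0I(1) B(1)] B(2) ub w_def z'_def by simp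
    then have bwz: "bless w z'" using False z'_def by (simp add: ble_def)
    have z'P: "z' \<in> pdom (fst P)" using pdom_mono[OF mc_Fd[OF B(1)]] B(2) bP z'_def by simp
    have xz: "snd P x z'" using good[OF B(1)] B(2) bP bwz z'_def by (simp add: bless_def)
    show False
    proof (cases "b < fst P")
      case True
      have "strict (snd P) z' w"
        by (rule KLP[OF D BD PD _ bwz]) (use True B(2) z(2) zw z'_def in \<open>simp_all add: indiff_sym\<close>)
      then have "snd P z' w" unfolding strict_def by simp
      then have "snd P x w" using rcP_trans[OF rcP xz] by simp
      then show False using wnx by simp
    next
      case False
      then have "B = P" using mc_eq[OF B(1) P] B(2) bP by simp
      then have "indiff (snd P) w x" using z(2) zw x_def by simp
      then show False using wnx unfolding indiff_def by simp
    qed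
  qed
qed


lemma mc_gt:
  assumes P: "P \<in> Iv" and P': "P' \<in> Iv" and lt: "fst P < fst P'" and dP': "F P' \<in> pdom (fst P)"
    and sw: "strict (snd P) (F P') (F P)"
  shows False
proof -
  have PD: "P \<in> D" using P mc_sub by auto
  have rcP: "restricted_classical P" using D_rc[OF D PD] .
  define x where "x = F P"
  have xP: "x \<in> pdom (fst P)" using mc_Fd[OF P] x_def by simp
  define Bd where "Bd = {u \<in> Iv. fst P \<le> fst u \<and> F u \<in> pdom (fst P) \<and> strict (snd P) (F u) x}"
  have P'Bd: "P' \<in> Bd" using P' lt sw dP' unfolding Bd_def x_def by simp
  have finB: "finite (fst ` F ` Bd)"
  proof (rule finite_subset)
    show "fst ` F ` Bd \<subseteq> fst ` F ` Iv" unfolding Bd_def by auto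
    show "finite (fst ` F ` Iv)" using fin by simp
  qed
  obtain u0 where u0: "u0 \<in> Bd" "\<And>u. u \<in> Bd \<Longrightarrow> fst (F u0) \<le> fst (F u)"
  proof -
    have ne: "fst ` F ` Bd \<noteq> {}" using P'Bd by blast
    have "Min (fst ` F ` Bd) \<in> fst ` F ` Bd" using finB ne by (rule Min_in)
    then obtain u0 where u0: "u0 \<in> Bd" "fst (F u0) = Min (fst ` F ` Bd)" by auto
    show ?thesis
    proof (rule that[OF u0(1)])
      fix u assume "u \<in> Bd"
      then have "Min (fst ` F ` Bd) \<le> fst (F u)" using finB by (intro Min_le) auto
      then show "fst (F u0) \<le> fst (F u)" using u0(2) by simp
    qed
  qed
  define w where "w = F u0"
  have u0I: "u0 \<in> Iv" "fst P \<le> fst u0" "w \<in> pdom (fst P)" "strict (snd P) w x"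
    using u0(1) unfolding Bd_def w_def by auto
  have wnx: "\<not> snd P x w" using u0I(4) unfolding strict_def by simp
  define W where "W = {fst u | u. u \<in> Iv \<and> fst P \<le> fst u \<and> F u = w}"
  define b where "b = Inf W"
  have Wu0: "fst u0 \<in> W" using u0I unfolding W_def w_def by blast
  have Wne: "W \<noteq> {}" using Wu0 by blast
  have Wbd: "bdd_below W" unfolding W_def by (rule bdd_belowI[of _ "fst P"]) auto
  have lb: "b \<le> fst u0" unfolding b_def by (rule cInf_lower[OF Wu0 Wbd])
  have Pb: "fst P \<le> b" unfolding b_def by (rule cInf_greatest[OF Wne]) (auto simp: W_def)
  have WB: "\<And>u. u \<in> Iv \<Longrightarrow> fst P \<le> fst u \<Longrightarrow> F u = w \<Longrightarrow> b \<le> fst u"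
  proof -
    fix u assume "u \<in> Iv" "fst P \<le> fst u" "F u = w"
    then have "fst u \<in> W" unfolding W_def by blast
    then show "b \<le> fst u" unfolding b_def by (rule cInf_lower[OF _ Wbd])
  qed
  have region: "\<And>u. u \<in> Iv \<Longrightarrow> b < fst u \<Longrightarrow> fst u \<le> fst u0 \<Longrightarrow> F u = w"
  proof -
    fix u assume u: "u \<in> Iv" "b < fst u" "fst u \<le> fst u0"
    then obtain e where "e \<in> W" "e < fst u" using cInf_less_iff[OF Wne Wbd] unfolding b_def by blast
    then obtain u' where u': "u' \<in> Iv" "fst P \<le> fst u'" "F u' = w" "fst u' < fst u" unfolding W_def by blast
    have "ble w (F u)" using mc_mono[OF u'(1) u(1)] u'(3,4) by simp
    moreover have "ble (F u) w" using mc_mono[OF u(1) u0I(1) u(3)] w_def by simp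
    ultimately show "F u = w" by (rule ble_antisym[symmetric])
  qed
  have good: "\<And>u. u \<in> Iv \<Longrightarrow> fst P \<le> fst u \<Longrightarrow> F u \<in> pdom (fst P) \<Longrightarrow> fst (F u) < fst w \<Longrightarrow> snd P x (F u)"
  proof (rule ccontr)
    fix u assume u: "u \<in> Iv" "fst P \<le> fst u" "F u \<in> pdom (fst P)" "fst (F u) < fst w"
      and n: "\<not> snd P x (F u)"
    have "snd P (F u) x" using rcP_total[OF rcP u(3) xP] n by blast
    then have "u \<in> Bd" using n u unfolding Bd_def strict_def by simp
    then have "fst w \<le> fst (F u)" using u0(2) w_def by simp
    then show False using u(4) by simp
  qed
  have pdl: "\<And>z s. bless z w \<Longrightarrow> z \<in> pdom s \<Longrightarrow> z \<in> pdom (fst P)"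
  proof -
    fix z s assume "bless z w" "z \<in> pdom s"
    then show "z \<in> pdom (fst P)" using u0I(3)
      by (cases z, cases w) (auto simp: pdom_iff bless_def)
  qed
  have bI: "fst lo \<le> b" "b \<le> fst hi" using mc_IvD[OF u0I(1)] mc_IvD[OF P] lb Pb by auto
  obtain B where B: "B \<in> Iv" "fst B = b" using mc_ex[OF bI] by blast
  have BD: "B \<in> D" using B mc_sub by auto
  show False
  proof (cases "F B = w")
    case True
    have Pltb: "fst P < b"
    proof (rule ccontr)
      assume "\<not> fst P < b"
      then have "B = P" using mc_eq[OF B(1) P] B(2) Pb by simp
      then have "w = x" using True x_def by simp
      then show False using u0I(4) unfolding strict_def by simp
    qed
    have Plh: "fst lo \<le> fst P" "fst P \<le> fst hi" using mc_IvD[OF P] by auto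
    obtain S where S: "\<forall>n. S n \<in> Iv \<and> fst (S n) = b + (fst P - b) / (real n + 2)"
      using mc_seq[OF bI Plh] by blast
    have Sin: "\<forall>n. S n \<in> Iv" using S by simp
    have mon: "\<forall>n. fst (S n) \<le> fst (S (Suc n))" using S seq_inc[of "fst P" b] Pb by simp
    have lim: "(\<lambda>n. fst (S n)) \<longlonglongrightarrow> fst B" using seq_fun_lim[of S b "fst P"] S B(2) by simp
    obtain z where z: "(\<lambda>n. F (S n)) \<longlonglongrightarrow> z" "indiff (snd B) z (F B)"
      using mc_vc[OF B(1) Sin _ lim] mon by blast
    obtain n where n: "F (S n) = z" using mc_finlim[OF Sin z(1)] by blast
    have pos: "fst (S n) < b" "fst P \<le> fst (S n)" using seq_between2[OF Pltb, of n] S by auto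
    have Sn: "S n \<in> Iv" using Sin by simp
    have nw: "z \<noteq> w"
    proof
      assume "z = w"
      then have "b \<le> fst (S n)" using WB[OF Sn pos(2)] n by simp
      then show False using pos by simp
    qed
    have "ble z w" using mc_mono[OF Sn B(1)] B(2) pos True n by simp
    then have bzw: "bless z w" using nw by (simp add: ble_def)
    have zS: "z \<in> pdom (fst (S n))" using mc_Fd[OF Sn] n by simp
    have zP: "z \<in> pdom (fst P)" using pdl[OF bzw zS] .
    have xz: "snd P x z" using good[OF Sn pos(2)] zP bzw n by (simp add: bless_def)
    have "strict (snd P) z w"
      by (rule KL2P[OF D BD PD _ bzw _ u0I(3)]) (use Pltb B(2) z(2) True in simp_all)
    then have "snd P z w" unfolding strict_def by simp
    then have "snd P x w" using rcP_trans[OF rcP xz] by simp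
    then show False using wnx by simp
  next
    case False
    have bu0: "b < fst u0"
    proof (rule ccontr)
      assume "\<not> b < fst u0"
      then have "B = u0" using mc_eq[OF B(1) u0I(1)] B(2) lb by simp
      then show False using False w_def by simp
    qed
    have u0lh: "fst lo \<le> fst u0" "fst u0 \<le> fst hi" using mc_IvD[OF u0I(1)] by auto
    obtain S where S: "\<forall>n. S n \<in> Iv \<and> fst (S n) = b + (fst u0 - b) / (real n + 2)"
      using mc_seq[OF bI u0lh] by blast
    have Sin: "\<forall>n. S n \<in> Iv" using S by simp
    have mon: "\<forall>n. fst (S (Suc n)) \<le> fst (S n)" using S seq_dec[of b "fst u0"] lb by simp
    have lim: "(\<lambda>n. fst (S n)) \<longlonglongrightarrow> fst B" using seq_fun_lim[of S b "fst u0"] S B(2) by simp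
    obtain z where z: "(\<lambda>n. F (S n)) \<longlonglongrightarrow> z" "indiff (snd B) z (F B)"
      using mc_vc[OF B(1) Sin _ lim] mon by blast
    have FS: "\<And>n. F (S n) = w"
    proof -
      fix n
      have "b < fst (S n)" "fst (S n) \<le> fst u0" using seq_between1[OF bu0, of n] S by auto
      then show "F (S n) = w" using region Sin by simp
    qed
    have "(\<lambda>n. F (S n)) \<longlonglongrightarrow> w" using FS by simp
    then have zw: "z = w" using z(1) LIMSEQ_unique by blast
    define z' where "z' = F B"
    have "ble z' w" using mc_mono[OF B(1) u0I(1)] B(2) lb w_def z'_def by simp
    then have bzw: "bless z' w" using False z'_def by (simp add: ble_def)
    have z'B: "z' \<in> pdom (fst B)" using mc_Fd[OF B(1)] z'_def by simp
    have z'P: "z' \<in> pdom (fst P)" using pdl[OF bzw z'B] .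
    have xz: "snd P x z'" using good[OF B(1)] B(2) Pb z'P bzw z'_def by (simp add: bless_def)
    show False
    proof (cases "fst P < b")
      case True
      have "strict (snd P) z' w"
        by (rule KL2P[OF D BD PD _ bzw _ u0I(3)]) (use True B(2) z(2) zw z'_def in \<open>simp_all add: indiff_sym\<close>)
      then have "snd P z' w" unfolding strict_def by simp
      then have "snd P x w" using rcP_trans[OF rcP xz] by simp
      then show False using wnx by simp
    next
      case False
      then have "B = P" using mc_eq[OF B(1) P] B(2) Pb by simp
      then have "indiff (snd P) w x" using z(2) zw x_def by simp
      then show False using wnx unfolding indiff_def by simp
    qed
  qed
qed

lemma MC_SP: "restricted_strategy_proof Iv F"
  unfolding restricted_strategy_proof_def
proof (intro ballI impI)
  fix P P' assume P: "P \<in> Iv" and P': "P' \<in> Iv" and dP': "F P' \<in> pdom (fst P)"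
  have "P \<in> D" using P mc_sub by blast
  then have rcP: "restricted_classical P" by (rule D_rc[OF D])
  have xP: "F P \<in> pdom (fst P)" using mc_Fd[OF P] .
  show "snd P (F P) (F P')"
  proof (rule ccontr)
    assume n: "\<not> snd P (F P) (F P')"
    then have sw: "strict (snd P) (F P') (F P)"
      using rcP_total[OF rcP xP dP'] unfolding strict_def by blast
    consider "fst P' < fst P" | "fst P' = fst P" | "fst P < fst P'" by linarith
    then show False
    proof cases
      case 1 show False using mc_lt[OF P P' 1 sw] .
    next
      case 2
      then have "P' = P" using mc_eq[OF P' P] by simp
      then show False using n rcP_refl[OF rcP xP] by simp
    next
      case 3 show False using mc_gt[OF P P' 3 dP' sw] .
    qed
  qed
qed

end


theorem mainTheorem17:
  fixes D :: "pref set" and lo hi :: pref and F :: "pref \<Rightarrow> bndl"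
  assumes "rich_single_crossing_domain D"
    and "lo \<in> D" and "hi \<in> D"
    and "is_mechanism (pref_interval D lo hi) F"
    and "finite (F ` pref_interval D lo hi)"
    and "\<forall>P\<in>pref_interval D lo hi. indiff (snd P) (F P) (0, 0) \<longrightarrow> F P = (0, 0)"
  shows "restricted_strategy_proof (pref_interval D lo hi) F \<longleftrightarrow>
         monotone_mech (pref_interval D lo hi) F \<and> VF_continuous D (pref_interval D lo hi) F"
proof
  have sub: "pref_interval D lo hi \<subseteq> D" unfolding pref_interval_def by auto
  assume sp: "restricted_strategy_proof (pref_interval D lo hi) F"
  have mo: "monotone_mech (pref_interval D lo hi) F"
    by (rule SP_mono[OF assms(1) sub assms(4) assms(6) sp])
  have "VF_continuous D (pref_interval D lo hi) F"
    by (rule SP_cont[OF assms(1) sub assms(4) assms(5) sp mo])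
  then show "monotone_mech (pref_interval D lo hi) F \<and> VF_continuous D (pref_interval D lo hi) F"
    using mo by simp
next
  assume h: "monotone_mech (pref_interval D lo hi) F \<and> VF_continuous D (pref_interval D lo hi) F"
  show "restricted_strategy_proof (pref_interval D lo hi) F"
    using MC_SP[OF assms(1) assms(2) assms(3) assms(4) assms(5)] h by simp
qed

end
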